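(* Let $k$ be an algebraically closed field, $n\ge1$, $1\le g\le n$, let $K$ be as in the context, let $\lambda\in k\setminus\{0\}$ and $m\in\mathbb N$. Let $R_m^\lambda$ be the full subcategory of $\operatorname{rep}K$ with objects $V_d^\lambda$, $1\le d\le m+2$. Let $Q_m^\lambda$ be the quiver with vertices $(\lambda,1),\dots,(\lambda,m+2)$ and arrows $\pi_\lambda(r):(\lambda,r+1)\to(\lambda,r)$ and $\rho_\lambda(r):(\lambda,r)\to(\lambda,r+1)$ for $r=1,\dots,m+1$. Let $F_\lambda:kQ_m^\lambda\to R_m^\lambda$ be the $k$-linear functor with $F_\lambda(\lambda,r)=V_r^\lambda$, where $F_\lambda\pi_\lambda(r):V_{r+1}^\lambda\to V_r^\lambda$ is given at every vertex of $K$ by the matrix $\begin{pmatrix}\mathbf 1_r & 0\end{pmatrix}\in k^{r\times(r+1)}$ and $F_\lambda\rho_\lambda(r):V_r^\lambda\to V_{r+1}^\lambda$ is given at every vertex by $\begin{pmatrix}0\\ \mathbf 1_r\end{pmatrix}\in k^{(r+1)\times r}$. Then $F_\lambda$ induces an isomorphism between the quotient of the path category $kQ_m^\lambda$ by the ideal generated by (1) $\pi_\lambda(r+1)\circ\rho_\lambda(r+1)=\rho_\lambda(r)\circ\pi_\lambda(r)$ for $r=1,\dots,m$, and (2) $\pi_\lambda(1)\circ\rho_\lambda(1)=0$, and the $k$-category $R_m^\lambda$.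
   Context: $K$: quiver with vertices $0,\dots,n$ and arrows $\beta_x:x\to x+1$ ($0\le x\le g-1$) and $\alpha_x:x+1\to x$ ($g\le x\le n$), indices modulo $n+1$; $\operatorname{rep}K$ is the category of finite-dimensional representations. For $d\ge1$, $V_d^\lambda$ is the representation with $V_d^\lambda(x)=k^d$ at every vertex, $V_d^\lambda(\beta_{g-1})=\lambda\,\mathrm{id}_d+J_d$, and $V_d^\lambda(\gamma)=\mathrm{id}_d$ for every other arrow $\gamma$, where $J_d$ is the $d\times d$ matrix with entries $1$ directly below the diagonal and $0$ elsewhere. $\mathbf 1_r$ is the $r\times r$ identity matrix. Composition $\circ$ is written right to left (apply the right factor first). *)

theory Defs
  imports "Jordan_Normal_Form.Matrix" "HOL-Computational_Algebra.Polynomial"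
begin

datatype arrK = Beta nat | Alpha nat

definition arrowsK :: "nat \<Rightarrow> nat \<Rightarrow> arrK set" where
  "arrowsK n g = {Beta x | x. x < g} \<union> {Alpha x | x. g \<le> x \<and> x \<le> n}"

fun srcK :: "nat \<Rightarrow> arrK \<Rightarrow> nat" where
  "srcK n (Beta x) = x mod (n + 1)"
| "srcK n (Alpha x) = (x + 1) mod (n + 1)"

fun tgtK :: "nat \<Rightarrow> arrK \<Rightarrow> nat" where
  "tgtK n (Beta x) = (x + 1) mod (n + 1)"
| "tgtK n (Alpha x) = x mod (n + 1)"

text \<open>A representation of K: dimension vector and a matrix for every arrow
  (matrix acting on column vectors, size dim(target) x dim(source)).\<close>
type_synonym 'a repK = "(nat \<Rightarrow> nat) \<times> (arrK \<Rightarrow> 'a mat)"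

definition is_repK :: "nat \<Rightarrow> nat \<Rightarrow> 'a repK \<Rightarrow> bool" where
  "is_repK n g V \<longleftrightarrow> (\<forall>\<gamma>\<in>arrowsK n g.
     snd V \<gamma> \<in> carrier_mat (fst V (tgtK n \<gamma>)) (fst V (srcK n \<gamma>)))"

definition homK :: "nat \<Rightarrow> nat \<Rightarrow> 'a::comm_ring_1 repK \<Rightarrow> 'a repK \<Rightarrow> (nat \<Rightarrow> 'a mat) set" where
  "homK n g V W = {f. (\<forall>x\<le>n. f x \<in> carrier_mat (fst W x) (fst V x))
      \<and> (\<forall>x>n. f x = 0\<^sub>m 0 0)
      \<and> (\<forall>\<gamma>\<in>arrowsK n g. f (tgtK n \<gamma>) * snd V \<gamma> = snd W \<gamma> * f (srcK n \<gamma>))}"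

definition Jmat :: "nat \<Rightarrow> 'a::comm_ring_1 mat" where
  "Jmat d = mat d d (\<lambda>(i,j). if i = j + 1 then 1 else 0)"

definition Vrep :: "nat \<Rightarrow> nat \<Rightarrow> 'a::comm_ring_1 \<Rightarrow> nat \<Rightarrow> 'a repK" where
  "Vrep n g lam d = (\<lambda>_. d,
     \<lambda>\<gamma>. if \<gamma> = Beta (g - 1) then lam \<cdot>\<^sub>m 1\<^sub>m d + Jmat d else 1\<^sub>m d)"

datatype arrQ = Pi nat | Rho nat

definition arrowsQ :: "nat \<Rightarrow> arrQ set" where
  "arrowsQ m = {Pi r | r. 1 \<le> r \<and> r \<le> m + 1} \<union> {Rho r | r. 1 \<le> r \<and> r \<le> m + 1}"

fun srcQ :: "arrQ \<Rightarrow> nat" where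
  "srcQ (Pi r) = r + 1"
| "srcQ (Rho r) = r"

fun tgtQ :: "arrQ \<Rightarrow> nat" where
  "tgtQ (Pi r) = r"
| "tgtQ (Rho r) = r + 1"

text \<open>Paths are lists of arrows in order of application (first arrow applied first);
  so the composite \<open>q \<circ> p\<close> is the list \<open>p @ q\<close>.\<close>
fun is_path :: "nat \<Rightarrow> nat \<Rightarrow> nat \<Rightarrow> arrQ list \<Rightarrow> bool" where
  "is_path m s t [] \<longleftrightarrow> s = t \<and> 1 \<le> s \<and> s \<le> m + 2"
| "is_path m s t (\<gamma> # p) \<longleftrightarrow> \<gamma> \<in> arrowsQ m \<and> srcQ \<gamma> = s \<and> 1 \<le> s \<and> s \<le> m + 2
     \<and> is_path m (tgtQ \<gamma>) t p"

definition kQ :: "nat \<Rightarrow> nat \<Rightarrow> nat \<Rightarrow> (arrQ list \<Rightarrow> 'a::field) set" where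
  "kQ m d e = {c. finite {p. c p \<noteq> 0} \<and> (\<forall>p. c p \<noteq> 0 \<longrightarrow> is_path m d e p)}"

definition ind :: "arrQ list \<Rightarrow> arrQ list \<Rightarrow> 'a::field" where
  "ind p = (\<lambda>q. if q = p then 1 else 0)"

text \<open>Generators of the ideal in kQ(d,e): u \<circ> rel \<circ> v for paths v : d \<rightarrow> a, u : a \<rightarrow> e,
  where rel is one of the relations
  (1) pi(r+1) \<circ> rho(r+1) - rho(r) \<circ> pi(r)  (r = 1..m, at vertex r+1),
  (2) pi(1) \<circ> rho(1)  (at vertex 1).\<close>
definition gensI :: "nat \<Rightarrow> nat \<Rightarrow> nat \<Rightarrow> (arrQ list \<Rightarrow> 'a::field) set" where
  "gensI m d e =
     {ind (v @ [Rho (r + 1), Pi (r + 1)] @ u) - ind (v @ [Pi r, Rho r] @ u) | v u r.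
        1 \<le> r \<and> r \<le> m \<and> is_path m d (r + 1) v \<and> is_path m (r + 1) e u}
   \<union> {ind (v @ [Rho 1, Pi 1] @ u) | v u. is_path m d 1 v \<and> is_path m 1 e u}"

inductive_set idealI :: "nat \<Rightarrow> nat \<Rightarrow> nat \<Rightarrow> (arrQ list \<Rightarrow> 'a::field) set"
  for m d e where
  zero: "(\<lambda>_. 0) \<in> idealI m d e"
| step: "x \<in> idealI m d e \<Longrightarrow> y \<in> gensI m d e \<Longrightarrow> (\<lambda>p. a * y p + x p) \<in> idealI m d e"

definition Farr :: "arrQ \<Rightarrow> 'a::comm_ring_1 mat" where
  "Farr \<gamma> = (case \<gamma> of
      Pi r \<Rightarrow> mat r (r + 1) (\<lambda>(i,j). if i = j then 1 else 0)
    | Rho r \<Rightarrow> mat (r + 1) r (\<lambda>(i,j). if i = j + 1 then 1 else 0))"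

fun Mpath :: "nat \<Rightarrow> arrQ list \<Rightarrow> 'a::comm_ring_1 mat" where
  "Mpath d [] = 1\<^sub>m d"
| "Mpath d (\<gamma> # p) = Mpath (tgtQ \<gamma>) p * Farr \<gamma>"

definition Fhom :: "nat \<Rightarrow> nat \<Rightarrow> nat \<Rightarrow> (arrQ list \<Rightarrow> 'a::field) \<Rightarrow> (nat \<Rightarrow> 'a mat)" where
  "Fhom n d e c = (\<lambda>x. if x \<le> n then
      mat e d (\<lambda>(i,j). \<Sum>p\<in>{p. c p \<noteq> 0}. c p * (Mpath d p $$ (i,j)))
     else 0\<^sub>m 0 0)"

definition zero_hom :: "nat \<Rightarrow> nat \<Rightarrow> nat \<Rightarrow> (nat \<Rightarrow> 'a::comm_ring_1 mat)" where
  "zero_hom n d e = (\<lambda>x. if x \<le> n then 0\<^sub>m e d else 0\<^sub>m 0 0)"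

end

theory Submission imports Defs begin

lemma sum_if_eq: "(\<Sum>q\<in>{0..<(n::nat)}. (if P q then 1 else 0) * (if q = a then (1::'a::comm_ring_1) else 0)) = (if a < n \<and> P a then 1 else 0)"
proof -
  have "(\<Sum>q\<in>{0..<(n::nat)}. (if P q then 1 else 0) * (if q = a then (1::'a) else 0)) = (\<Sum>q\<in>{0..<n}. if q = a then (if P a then 1 else 0) else 0)"
    by (rule sum.cong) auto
  also have "\<dots> = (if a < n \<and> P a then 1 else 0)" by (simp add: sum.delta)
  finally show ?thesis .
qed

lemma sum_if_eq2: "(\<Sum>q\<in>{0..<(n::nat)}. (if q = a then (1::'a::comm_ring_1) else 0) * (if P q then 1 else 0)) = (if a < n \<and> P a then 1 else 0)"
  using sum_if_eq[of P a n] by (simp add: mult.commute)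

lemma Farr_carrier: "Farr \<gamma> \<in> carrier_mat (tgtQ \<gamma>) (srcQ \<gamma>)"
  by (cases \<gamma>) (auto simp: Farr_def)

lemma Farr_Pi: "Farr (Pi r) = mat r (r + 1) (\<lambda>(i,j). if i = j then 1 else 0)" by (simp add: Farr_def)
lemma Farr_Rho: "Farr (Rho r) = mat (r + 1) r (\<lambda>(i,j). if i = j + 1 then 1 else 0)" by (simp add: Farr_def)

lemma rel1: "(Farr (Pi (r+1)) :: 'a::comm_ring_1 mat) * Farr (Rho (r+1)) = Farr (Rho r) * Farr (Pi r)"
  by (rule eq_matI) (auto simp: Farr_Pi Farr_Rho scalar_prod_def sum_if_eq sum_if_eq2)

lemma rel2: "(Farr (Pi 1) :: 'a::comm_ring_1 mat) * Farr (Rho 1) = 0\<^sub>m 1 1"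
  by (rule eq_matI) (auto simp: Farr_Pi Farr_Rho scalar_prod_def sum_if_eq sum_if_eq2)

definition JC :: "nat \<Rightarrow> nat \<Rightarrow> 'a::comm_ring_1 mat \<Rightarrow> bool" where
  "JC e d M \<longleftrightarrow> (\<forall>i<e. \<forall>j<d. (if j + 1 < d then M $$ (i, j+1) else 0) = (if 0 < i then M $$ (i - 1, j) else 0))"

lemma MJ_entry: "M \<in> carrier_mat e d \<Longrightarrow> i < e \<Longrightarrow> j < d \<Longrightarrow>
   (M * Jmat d) $$ (i,j) = (if j + 1 < d then M $$ (i, j+1) else 0)"
proof -
  assume M: "M \<in> carrier_mat e d" and ij: "i < e" "j < d"
  have "(M * Jmat d) $$ (i,j) = (\<Sum>q\<in>{0..<d}. M $$ (i,q) * (if q = j + 1 then 1 else 0))"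
    using M ij by (simp add: Jmat_def scalar_prod_def)
  also have "\<dots> = (\<Sum>q\<in>{0..<d}. if q = j + 1 then M $$ (i,j+1) else 0)"
    by (rule sum.cong) auto
  also have "\<dots> = (if j + 1 < d then M $$ (i, j+1) else 0)" by (simp add: sum.delta)
  finally show ?thesis .
qed

lemma JM_entry: "M \<in> carrier_mat e d \<Longrightarrow> i < e \<Longrightarrow> j < d \<Longrightarrow>
   (Jmat e * M) $$ (i,j) = (if 0 < i then M $$ (i - 1, j) else 0)"
proof -
  assume M: "M \<in> carrier_mat e d" and ij: "i < e" "j < d"
  have "(Jmat e * M) $$ (i,j) = (\<Sum>q\<in>{0..<e}. (if i = q + 1 then 1 else 0) * M $$ (q,j))"
    using M ij by (simp add: Jmat_def scalar_prod_def)
  also have "\<dots> = (\<Sum>q\<in>{0..<e}. if q = i - 1 \<and> 0 < i then M $$ (i - 1,j) else 0)"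
    by (rule sum.cong) auto
  also have "\<dots> = (if 0 < i then M $$ (i - 1, j) else 0)" using ij by (cases i) (simp_all add: sum.delta)
  finally show ?thesis .
qed

lemma JC_iff: "M \<in> carrier_mat e d \<Longrightarrow> (M * Jmat d = Jmat e * M) \<longleftrightarrow> JC e d M"
proof -
  assume M: "M \<in> carrier_mat e d"
  have c1: "M * Jmat d \<in> carrier_mat e d" "Jmat e * M \<in> carrier_mat e d" using M by (auto simp: Jmat_def)
  show ?thesis
  proof
    assume "M * Jmat d = Jmat e * M"
    thus "JC e d M" using MJ_entry[OF M] JM_entry[OF M] unfolding JC_def by metis
  next
    assume H: "JC e d M"
    show "M * Jmat d = Jmat e * M"
    proof (rule eq_matI)
      fix i j assume "i < dim_row (Jmat e * M)" "j < dim_col (Jmat e * M)"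
      hence ij: "i<e" "j<d" using c1 by auto
      show "(M * Jmat d) $$ (i,j) = (Jmat e * M) $$ (i,j)"
        using H ij MJ_entry[OF M ij] JM_entry[OF M ij] unfolding JC_def by simp
    qed (use c1 M in \<open>auto simp: Jmat_def\<close>)
  qed
qed

lemma Farr_JC: "JC (tgtQ \<gamma>) (srcQ \<gamma>) (Farr \<gamma> :: 'a::comm_ring_1 mat)"
  by (cases \<gamma>) (auto simp: JC_def Farr_def)

lemma arrowsQ_range: "\<gamma> \<in> arrowsQ m \<Longrightarrow> 1 \<le> tgtQ \<gamma> \<and> tgtQ \<gamma> \<le> m + 2 \<and> 1 \<le> srcQ \<gamma> \<and> srcQ \<gamma> \<le> m + 2"
  by (auto simp: arrowsQ_def)

lemma is_path_append: "is_path m s t (p @ q) \<longleftrightarrow> (\<exists>w. is_path m s w p \<and> is_path m w t q)"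
proof (induction p arbitrary: s)
  case Nil
  show ?case
  proof
    assume "is_path m s t ([] @ q)"
    moreover have "is_path m s t q \<Longrightarrow> 1 \<le> s \<and> s \<le> m + 2" by (cases q) auto
    ultimately show "\<exists>w. is_path m s w [] \<and> is_path m w t q" by auto
  qed auto
next
  case (Cons a p)
  then show ?case by auto
qed

lemma is_path_range: "is_path m s t p \<Longrightarrow> 1 \<le> s \<and> s \<le> m + 2 \<and> 1 \<le> t \<and> t \<le> m + 2"
  by (induction p arbitrary: s) auto

lemma Mpath_carrier: "is_path m s t p \<Longrightarrow> (Mpath s p :: 'a::comm_ring_1 mat) \<in> carrier_mat t s"
proof (induction p arbitrary: s)
  case Nil thus ?case by simp
next
  case (Cons \<gamma> p)
  have "is_path m (tgtQ \<gamma>) t p" using Cons.prems by simp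
  hence "(Mpath (tgtQ \<gamma>) p :: 'a mat) \<in> carrier_mat t (tgtQ \<gamma>)" by (rule Cons.IH)
  moreover have "(Farr \<gamma> :: 'a mat) \<in> carrier_mat (tgtQ \<gamma>) s" using Cons.prems Farr_carrier[of \<gamma>] by auto
  ultimately show ?case by auto
qed

lemma Mpath_append: "is_path m s w p \<Longrightarrow> is_path m w t q \<Longrightarrow> (Mpath s (p @ q) :: 'a::comm_ring_1 mat) = Mpath w q * Mpath s p"
proof (induction p arbitrary: s)
  case Nil
  thus ?case using Mpath_carrier[OF Nil(2)] by (auto intro!: right_mult_one_mat[symmetric])
next
  case (Cons \<gamma> p)
  hence p: "is_path m (tgtQ \<gamma>) w p" and s: "srcQ \<gamma> = s" by auto
  have "(Mpath s ((\<gamma> # p) @ q) :: 'a mat) = Mpath (tgtQ \<gamma>) (p @ q) * Farr \<gamma>" by simp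
  also have "\<dots> = ((Mpath w q :: 'a mat) * Mpath (tgtQ \<gamma>) p) * Farr \<gamma>" using Cons.IH[OF p Cons(3)] by simp
  also have "\<dots> = Mpath w q * (Mpath (tgtQ \<gamma>) p * Farr \<gamma>)"
    using Mpath_carrier[OF p] Mpath_carrier[OF Cons(3)] Farr_carrier[of \<gamma>] by (metis assoc_mult_mat)
  finally show ?case by simp
qed

lemma Mpath_comm: "is_path m s t p \<Longrightarrow> (Mpath s p :: 'a::comm_ring_1 mat) * Jmat s = Jmat t * Mpath s p"
proof (induction p arbitrary: s)
  case Nil thus ?case by (simp add: Jmat_def)
next
  case (Cons \<gamma> p)
  hence p: "is_path m (tgtQ \<gamma>) t p" and s: "srcQ \<gamma> = s" by auto
  let ?A = "Mpath (tgtQ \<gamma>) p :: 'a mat" and ?F = "Farr \<gamma> :: 'a mat"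
  have A: "?A \<in> carrier_mat t (tgtQ \<gamma>)" by (rule Mpath_carrier[OF p])
  have F: "?F \<in> carrier_mat (tgtQ \<gamma>) s" using Farr_carrier[of \<gamma>] s by simp
  have J: "Jmat k \<in> carrier_mat k k" for k by (simp add: Jmat_def)
  have FJ: "?F * Jmat s = Jmat (tgtQ \<gamma>) * ?F" using JC_iff[OF F] Farr_JC[of \<gamma>] s by simp
  have "(?A * ?F) * Jmat s = ?A * (?F * Jmat s)" using A F J by (metis assoc_mult_mat)
  also have "\<dots> = ?A * (Jmat (tgtQ \<gamma>) * ?F)" by (simp add: FJ)
  also have "\<dots> = (?A * Jmat (tgtQ \<gamma>)) * ?F" using A F J by (metis assoc_mult_mat)
  also have "\<dots> = (Jmat t * ?A) * ?F" using Cons.IH[OF p] by simp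
  also have "\<dots> = Jmat t * (?A * ?F)" using A F J by (metis assoc_mult_mat)
  finally show ?case by simp
qed

lemma Mpath_JC: "is_path m s t p \<Longrightarrow> JC t s (Mpath s p :: 'a::comm_ring_1 mat)"
  using JC_iff[OF Mpath_carrier] Mpath_comm by blast

fun Dn :: "nat \<Rightarrow> nat \<Rightarrow> arrQ list" where
  "Dn a 0 = []"
| "Dn a (Suc k) = Pi (a - 1) # Dn (a - 1) k"

fun Up :: "nat \<Rightarrow> nat \<Rightarrow> arrQ list" where
  "Up a 0 = []"
| "Up a (Suc k) = Rho a # Up (Suc a) k"

definition NP :: "nat \<Rightarrow> nat \<Rightarrow> nat \<Rightarrow> arrQ list" where
  "NP d l e = Dn d (d - l) @ Up l (e - l)"

lemma is_path_Dn: "k + 1 \<le> a \<Longrightarrow> a \<le> m + 2 \<Longrightarrow> is_path m a (a - k) (Dn a k)"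
proof (induction k arbitrary: a)
  case (Suc k) thus ?case using Suc.IH[of "a - 1"] by (auto simp: arrowsQ_def diff_diff_left)
qed simp

lemma is_path_Up: "1 \<le> a \<Longrightarrow> a + k \<le> m + 2 \<Longrightarrow> is_path m a (a + k) (Up a k)"
proof (induction k arbitrary: a)
  case (Suc k) thus ?case using Suc.IH[of "Suc a"] by (auto simp: arrowsQ_def)
qed simp

lemma Up_snoc: "Up a k @ [Rho (a + k)] = Up a (Suc k)"
proof (induction k arbitrary: a)
  case (Suc k) show ?case using Suc.IH[of "Suc a"] by simp
qed simp

lemma Dn_snoc: "Dn a k @ [Pi (a - Suc k)] = Dn a (Suc k)"
proof (induction k arbitrary: a)
  case (Suc k) show ?case using Suc.IH[of "a - 1"] by (simp add: diff_diff_left del: Dn.simps) (simp add: diff_diff_left)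
qed simp

lemma Mpath_Dn: "k + 1 \<le> a \<Longrightarrow> (Mpath a (Dn a k) :: 'a::comm_ring_1 mat) = mat (a - k) a (\<lambda>(i,j). if i = j then 1 else 0)"
proof (induction k arbitrary: a)
  case 0 thus ?case by (auto intro!: eq_matI)
next
  case (Suc k)
  have IH: "(Mpath (a - 1) (Dn (a - 1) k) :: 'a mat) = mat (a - 1 - k) (a - 1) (\<lambda>(i,j). if i = j then 1 else 0)"
    using Suc by auto
  obtain b where b: "a = Suc b" using Suc(2) by (cases a) auto
  have IH': "(Mpath b (Dn b k) :: 'a mat) = mat (b - k) b (\<lambda>(i,j). if i = j then 1 else 0)"
    using IH b by simp
  show ?case using Suc(2) unfolding b
    by (simp add: IH' Farr_Pi, intro eq_matI) (auto simp: scalar_prod_def sum_if_eq sum_if_eq2)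
qed

lemma Mpath_Up: "(Mpath a (Up a k) :: 'a::comm_ring_1 mat) = mat (a + k) a (\<lambda>(i,j). if i = j + k then 1 else 0)"
proof (induction k arbitrary: a)
  case 0 thus ?case by (auto intro!: eq_matI)
next
  case (Suc k)
  show ?case
    by (simp add: Suc Farr_Rho, intro eq_matI) (auto simp: scalar_prod_def sum_if_eq sum_if_eq2)
qed

lemma length_Dn: "length (Dn a k) = k" by (induction k arbitrary: a) auto
lemma length_Up: "length (Up a k) = k" by (induction k arbitrary: a) auto

lemma NP_inj: "l \<le> d \<Longrightarrow> l \<le> e \<Longrightarrow> l' \<le> d \<Longrightarrow> l' \<le> e \<Longrightarrow> NP d l e = NP d l' e \<Longrightarrow> l = l'"
  by (drule arg_cong[where f=length]) (simp add: NP_def length_Dn length_Up)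

lemma is_path_NP: "1 \<le> l \<Longrightarrow> l \<le> d \<Longrightarrow> l \<le> e \<Longrightarrow> d \<le> m + 2 \<Longrightarrow> e \<le> m + 2 \<Longrightarrow> is_path m d e (NP d l e)"
  unfolding NP_def is_path_append
  using is_path_Dn[of "d - l" d m] is_path_Up[of l "e - l" m] by (intro exI[of _ l]) auto

lemma Mpath_NP: "1 \<le> l \<Longrightarrow> l \<le> d \<Longrightarrow> l \<le> e \<Longrightarrow> d \<le> m + 2 \<Longrightarrow> e \<le> m + 2 \<Longrightarrow>
  (Mpath d (NP d l e) :: 'a::comm_ring_1 mat) = mat e d (\<lambda>(i,j). if j < l \<and> i = j + (e - l) then 1 else 0)"
proof -
  assume a: "1 \<le> l" "l \<le> d" "l \<le> e" "d \<le> m + 2" "e \<le> m + 2"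
  have p1: "is_path m d l (Dn d (d - l))" using is_path_Dn[of "d - l" d m] a by auto
  have p2: "is_path m l e (Up l (e - l))" using is_path_Up[of l "e - l" m] a by auto
  have "(Mpath d (NP d l e) :: 'a mat) = Mpath l (Up l (e - l)) * Mpath d (Dn d (d - l))"
    unfolding NP_def by (rule Mpath_append[OF p1 p2])
  also have "\<dots> = mat e l (\<lambda>(i,j). if i = j + (e - l) then 1 else 0) * mat l d (\<lambda>(i,j). if i = j then 1 else 0)"
    using a by (simp add: Mpath_Up Mpath_Dn)
  also have "\<dots> = mat e d (\<lambda>(i,j). if j < l \<and> i = j + (e - l) then 1 else 0)"
    by (intro eq_matI) (auto simp: scalar_prod_def sum_if_eq sum_if_eq2)
  finally show ?thesis .
qed

section \<open>Ideal closure\<close>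

lemma I_add: "x \<in> idealI m d e \<Longrightarrow> y \<in> idealI m d e \<Longrightarrow> (\<lambda>p. x p + y p) \<in> idealI m d e"
proof (induction x rule: idealI.induct)
  case zero thus ?case by simp
next
  case (step x y' a)
  have "(\<lambda>p. a * y' p + (x p + y p)) \<in> idealI m d e" using step by (intro idealI.step)
  thus ?case by (simp add: add.assoc)
qed

lemma I_smult: "x \<in> idealI m d e \<Longrightarrow> (\<lambda>p. b * x p) \<in> idealI m d e"
proof (induction x rule: idealI.induct)
  case zero thus ?case by (simp add: idealI.zero)
next
  case (step x y a)
  have "(\<lambda>p. (b * a) * y p + b * x p) \<in> idealI m d e" using step by (intro idealI.step)
  thus ?case by (simp add: algebra_simps)
qed

lemma I_gen: "y \<in> gensI m d e \<Longrightarrow> y \<in> idealI m d e"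
  using idealI.step[OF idealI.zero, of y m d e 1] by simp

lemma I_diff: "x \<in> idealI m d e \<Longrightarrow> y \<in> idealI m d e \<Longrightarrow> (\<lambda>p. x p - y p) \<in> idealI m d e"
  using I_add[OF _ I_smult[of y m d e "-1"], of x] by simp

lemma I_sum: "finite A \<Longrightarrow> (\<And>i. i \<in> A \<Longrightarrow> f i \<in> idealI m d e) \<Longrightarrow> (\<lambda>p. \<Sum>i\<in>A. f i p) \<in> idealI m d e"
proof (induction A rule: finite_induct)
  case empty thus ?case by (simp add: idealI.zero)
next
  case (insert a A)
  have "(\<lambda>p. f a p + (\<Sum>i\<in>A. f i p)) \<in> idealI m d e" using insert by (intro I_add) auto
  thus ?case using insert by simp
qed

section \<open>Evaluation\<close>

definition EvS :: "nat \<Rightarrow> arrQ list set \<Rightarrow> (arrQ list \<Rightarrow> 'a::field) \<Rightarrow> nat \<Rightarrow> nat \<Rightarrow> 'a" where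
  "EvS d S c i j = (\<Sum>p\<in>S. c p * (Mpath d p $$ (i,j)))"

lemma EvS_mono: "finite T \<Longrightarrow> {p. c p \<noteq> 0} \<subseteq> S \<Longrightarrow> S \<subseteq> T \<Longrightarrow> EvS d S c i j = EvS d T c i j"
  unfolding EvS_def by (rule sum.mono_neutral_left) auto

lemma EvS_eq: "finite S \<Longrightarrow> finite T \<Longrightarrow> {p. c p \<noteq> 0} \<subseteq> S \<Longrightarrow> {p. c p \<noteq> 0} \<subseteq> T \<Longrightarrow> EvS d S c i j = EvS d T c i j"
  using EvS_mono[of "S \<union> T" c S d i j] EvS_mono[of "S \<union> T" c T d i j] by auto

lemma EvS_lin: "EvS d S (\<lambda>p. a * y p + x p) i j = a * EvS d S y i j + EvS d S x i j"
  unfolding EvS_def by (simp add: algebra_simps sum.distrib sum_distrib_left)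

lemma EvS_ind: "finite S \<Longrightarrow> q \<in> S \<Longrightarrow> EvS d S (ind q) i j = Mpath d q $$ (i,j)"
proof -
  assume S: "finite S" "q \<in> S"
  have "EvS d S (ind q) i j = (\<Sum>p\<in>S. if p = q then Mpath d q $$ (i,j) else 0)"
    unfolding EvS_def ind_def by (rule sum.cong) auto
  thus ?thesis using S by simp
qed

lemma Mpath_mid_eq:
  assumes v: "is_path m s r v" and q1: "is_path m r w q1" and q2: "is_path m r w q2" and u: "is_path m w t u"
    and eq: "(Mpath r q1 :: 'a::comm_ring_1 mat) = Mpath r q2"
  shows "(Mpath s (v @ q1 @ u) :: 'a mat) = Mpath s (v @ q2 @ u)"
proof -
  have a: "is_path m r t (q1 @ u)" "is_path m r t (q2 @ u)" using q1 q2 u is_path_append by blast+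
  show ?thesis using Mpath_append[OF v a(1)] Mpath_append[OF v a(2)] Mpath_append[OF q1 u] Mpath_append[OF q2 u] eq
    by (metis (no_types))
qed

lemma Mpath_mid_zero:
  assumes v: "is_path m s r v" and q: "is_path m r w q" and u: "is_path m w t u"
    and z: "(Mpath r q :: 'a::comm_ring_1 mat) = 0\<^sub>m w r"
  shows "(Mpath s (v @ q @ u) :: 'a mat) = 0\<^sub>m t s"
proof -
  have a: "is_path m r t (q @ u)" using q u is_path_append by blast
  have "(Mpath s (v @ q @ u) :: 'a mat) = (Mpath w u * 0\<^sub>m w r) * Mpath s v"
    using Mpath_append[OF v a, where 'a='a] Mpath_append[OF q u, where 'a='a] z by simp
  also have "\<dots> = 0\<^sub>m t s" using Mpath_carrier[OF u, where 'a='a] Mpath_carrier[OF v, where 'a='a] 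
    by (simp add: right_mult_zero_mat left_mult_zero_mat)
  finally show ?thesis .
qed

lemma gen_ev:
  assumes y: "y \<in> gensI m d e"
  shows "\<exists>S. finite S \<and> {p. y p \<noteq> 0} \<subseteq> S \<and> (\<forall>i<e. \<forall>j<d. EvS d S y i j = 0)"
  using y unfolding gensI_def
proof (elim UnE CollectE exE conjE)
  fix v u r assume yy: "y = ind (v @ [Rho (r + 1), Pi (r + 1)] @ u) - ind (v @ [Pi r, Rho r] @ u)"
    and r: "1 \<le> r" "r \<le> m" and v: "is_path m d (r + 1) v" and u: "is_path m (r + 1) e u"
  let ?p1 = "v @ [Rho (r + 1), Pi (r + 1)] @ u" and ?p2 = "v @ [Pi r, Rho r] @ u"
  have q1: "is_path m (r+1) (r+1) [Rho (r + 1), Pi (r + 1)]" using r by (auto simp: arrowsQ_def)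
  have q2: "is_path m (r+1) (r+1) [Pi r, Rho r]" using r by (auto simp: arrowsQ_def)
  have "(Mpath (r+1) [Rho (r + 1), Pi (r + 1)] :: 'a mat) = Mpath (r+1) [Pi r, Rho r]"
  proof -
    have "(Mpath (r+1) [Rho (r + 1), Pi (r + 1)] :: 'a mat) = 1\<^sub>m (r+1) * Farr (Pi (r+1)) * Farr (Rho (r+1))" by simp
    also have "\<dots> = Farr (Pi (r+1)) * Farr (Rho (r+1))" using Farr_carrier[of "Pi (r+1)", where 'a='a] by (simp add: left_mult_one_mat)
    also have "\<dots> = Farr (Rho r) * Farr (Pi r)" by (rule rel1)
    also have "\<dots> = 1\<^sub>m (r+1) * Farr (Rho r) * Farr (Pi r)" using Farr_carrier[of "Rho r", where 'a='a] by (simp add: left_mult_one_mat)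
    finally show ?thesis by simp
  qed
  hence M: "(Mpath d ?p1 :: 'a mat) = Mpath d ?p2" by (rule Mpath_mid_eq[OF v q1 q2 u])
  show ?thesis
  proof (intro exI[of _ "{?p1, ?p2}"] conjI allI impI)
    show "{p. y p \<noteq> 0} \<subseteq> {?p1, ?p2}" unfolding yy ind_def by auto
    fix i j assume "i < e" "j < d"
    have "EvS d {?p1, ?p2} y i j = EvS d {?p1, ?p2} (ind ?p1) i j - EvS d {?p1, ?p2} (ind ?p2) i j"
      unfolding EvS_def yy by (simp add: algebra_simps sum_subtractf)
    also have "\<dots> = 0" using M by (simp add: EvS_ind)
    finally show "EvS d {?p1, ?p2} y i j = 0" .
  qed simp
next
  fix v u assume yy: "y = ind (v @ [Rho 1, Pi 1] @ u)" and v: "is_path m d 1 v" and u: "is_path m 1 e u"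
  let ?p1 = "v @ [Rho 1, Pi 1] @ u"
  have q1: "is_path m 1 1 [Rho 1, Pi 1]" by (auto simp: arrowsQ_def)
  have "(Mpath 1 [Rho 1, Pi 1] :: 'a mat) = 0\<^sub>m 1 1"
  proof -
    have "(Mpath 1 [Rho 1, Pi 1] :: 'a mat) = 1\<^sub>m 1 * Farr (Pi 1) * Farr (Rho 1)" by simp
    also have "\<dots> = Farr (Pi 1) * Farr (Rho 1)" using Farr_carrier[of "Pi 1", where 'a='a] by (simp add: left_mult_one_mat)
    also have "\<dots> = 0\<^sub>m 1 1" by (rule rel2)
    finally show ?thesis .
  qed
  hence M: "(Mpath d ?p1 :: 'a mat) = 0\<^sub>m e d" by (rule Mpath_mid_zero[OF v q1 u])
  show ?thesis
  proof (intro exI[of _ "{?p1}"] conjI allI impI)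
    show "{p. y p \<noteq> 0} \<subseteq> {?p1}" unfolding yy ind_def by auto
    fix i j assume "i < e" "j < d"
    thus "EvS d {?p1} y i j = 0" unfolding yy using M by (simp add: EvS_ind)
  qed simp
qed

lemma ideal_ev:
  assumes x: "x \<in> idealI m d e"
  shows "finite {p. x p \<noteq> 0} \<and> (\<forall>S i j. finite S \<longrightarrow> {p. x p \<noteq> 0} \<subseteq> S \<longrightarrow> i < e \<longrightarrow> j < d \<longrightarrow> EvS d S x i j = 0)"
  using x
proof (induction x rule: idealI.induct)
  case zero thus ?case by (simp add: EvS_def)
next
  case (step x y a)
  obtain S0 where S0: "finite S0" "{p. y p \<noteq> 0} \<subseteq> S0" "\<forall>i<e. \<forall>j<d. EvS d S0 y i j = 0"
    using gen_ev[OF step(2)] by blast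
  let ?z = "\<lambda>p. a * y p + x p"
  have sub: "{p. ?z p \<noteq> 0} \<subseteq> S0 \<union> {p. x p \<noteq> 0}" using S0(2) by auto
  have fin: "finite (S0 \<union> {p. x p \<noteq> 0})" using S0 step by auto
  show ?case
  proof (intro conjI allI impI)
    show "finite {p. ?z p \<noteq> 0}" using sub fin finite_subset by blast
    fix S i j assume S: "finite S" "{p. ?z p \<noteq> 0} \<subseteq> S" and ij: "i < e" "j < d"
    let ?T = "S \<union> S0 \<union> {p. x p \<noteq> 0}"
    have T: "finite ?T" using S fin by auto
    have "EvS d S ?z i j = EvS d ?T ?z i j" using S T by (intro EvS_mono) auto
    also have "\<dots> = a * EvS d ?T y i j + EvS d ?T x i j" by (rule EvS_lin)
    also have "EvS d ?T y i j = EvS d S0 y i j" using S0 T by (intro EvS_mono[symmetric]) auto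
    also have "EvS d ?T x i j = 0" using step T ij by auto
    finally show "EvS d S ?z i j = 0" using S0(3) ij by simp
  qed
qed

section \<open>Normal forms\<close>

lemma gen1: "1 \<le> r \<Longrightarrow> r \<le> m \<Longrightarrow> is_path m d (r+1) v \<Longrightarrow> is_path m (r+1) e u \<Longrightarrow>
  (ind (v @ [Rho (r+1), Pi (r+1)] @ u) - ind (v @ [Pi r, Rho r] @ u) :: arrQ list \<Rightarrow> 'a::field) \<in> idealI m d e"
  by (rule I_gen) (unfold gensI_def, blast)

lemma gen2: "is_path m d 1 v \<Longrightarrow> is_path m 1 e u \<Longrightarrow>
  (ind (v @ [Rho 1, Pi 1] @ u) :: arrQ list \<Rightarrow> 'a::field) \<in> idealI m d e"
  by (rule I_gen) (unfold gensI_def, blast)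

lemma I_trans: "(ind X - ind Y :: arrQ list \<Rightarrow> 'a::field) \<in> idealI m d e \<Longrightarrow> (ind Y - ind Z :: arrQ list \<Rightarrow> 'a) \<in> idealI m d e
   \<Longrightarrow> (ind X - ind Z :: arrQ list \<Rightarrow> 'a) \<in> idealI m d e"
proof -
  assume a: "(ind X - ind Y :: arrQ list \<Rightarrow> 'a::field) \<in> idealI m d e" "(ind Y - ind Z :: arrQ list \<Rightarrow> 'a) \<in> idealI m d e"
  have "(\<lambda>p. (ind X - ind Y) p + (ind Y - ind Z) p :: 'a) \<in> idealI m d e" by (rule I_add[OF a])
  moreover have "(\<lambda>p. (ind X - ind Y) p + (ind Y - ind Z) p :: 'a) = ind X - ind Z" by auto
  ultimately show ?thesis by simp
qed

lemma I_trans0: "(ind X - ind Y :: arrQ list \<Rightarrow> 'a::field) \<in> idealI m d e \<Longrightarrow> (ind Y :: arrQ list \<Rightarrow> 'a) \<in> idealI m d e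
   \<Longrightarrow> (ind X :: arrQ list \<Rightarrow> 'a) \<in> idealI m d e"
proof -
  assume a: "(ind X - ind Y :: arrQ list \<Rightarrow> 'a::field) \<in> idealI m d e" "(ind Y :: arrQ list \<Rightarrow> 'a) \<in> idealI m d e"
  have "(\<lambda>p. (ind X - ind Y) p + ind Y p :: 'a) \<in> idealI m d e" by (rule I_add[OF a])
  moreover have "(\<lambda>p. (ind X - ind Y) p + ind Y p :: 'a) = ind X" by auto
  ultimately show ?thesis by simp
qed

lemma I_refl: "(ind X - ind X :: arrQ list \<Rightarrow> 'a::field) \<in> idealI m d e"
proof -
  have "(ind X - ind X :: arrQ list \<Rightarrow> 'a::field) = (\<lambda>_. 0)" by auto
  thus ?thesis by (simp add: idealI.zero)
qed

lemma bubble: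
  "1 \<le> a \<Longrightarrow> a + Suc k \<le> m + 2 \<Longrightarrow> is_path m d a v \<Longrightarrow> is_path m (a + k) e u \<Longrightarrow>
  (if a = 1 then (ind (v @ Up a (Suc k) @ [Pi (a + k)] @ u) :: arrQ list \<Rightarrow> 'a::field) \<in> idealI m d e
   else (ind (v @ Up a (Suc k) @ [Pi (a + k)] @ u) - ind (v @ [Pi (a - 1)] @ Up (a - 1) (Suc k) @ u) :: arrQ list \<Rightarrow> 'a) \<in> idealI m d e)"
proof (induction k arbitrary: a v)
  case 0
  show ?case
  proof (cases "a = 1")
    case True
    thus ?thesis using gen2[of m d v e u] 0 by simp
  next
    case False
    then obtain r where r: "a = r + 1" "1 \<le> r" using 0 by (cases a) auto
    have "(ind (v @ [Rho (r+1), Pi (r+1)] @ u) - ind (v @ [Pi r, Rho r] @ u) :: arrQ list \<Rightarrow> 'a) \<in> idealI m d e"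
      using 0 r by (intro gen1) auto
    thus ?thesis using False r by simp
  qed
next
  case (Suc k)
  have v': "is_path m d (a + 1) (v @ [Rho a])" using Suc.prems by (auto simp: is_path_append arrowsQ_def)
  have IH: "(ind ((v @ [Rho a]) @ Up (a+1) (Suc k) @ [Pi (a + 1 + k)] @ u) - ind ((v @ [Rho a]) @ [Pi a] @ Up a (Suc k) @ u) :: arrQ list \<Rightarrow> 'a) \<in> idealI m d e"
    using Suc.IH[OF _ _ v'] Suc.prems by auto
  have eq1: "(v @ [Rho a]) @ Up (a+1) (Suc k) @ [Pi (a + 1 + k)] @ u = v @ Up a (Suc (Suc k)) @ [Pi (a + Suc k)] @ u" by simp
  have eq2: "(v @ [Rho a]) @ [Pi a] @ Up a (Suc k) @ u = v @ [Rho a, Pi a] @ (Up a (Suc k) @ u)" by simp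
  have U: "is_path m a e (Up a (Suc k) @ u)" using Suc.prems is_path_Up[of a "Suc k" m] by (auto simp: is_path_append)
  show ?case
  proof (cases "a = 1")
    case True
    have "(ind (v @ [Rho 1, Pi 1] @ (Up 1 (Suc k) @ u)) :: arrQ list \<Rightarrow> 'a) \<in> idealI m d e"
      using Suc.prems True U by (intro gen2) auto
    thus ?thesis using I_trans0[OF IH[unfolded eq1 eq2]] True by simp
  next
    case False
    then obtain r where r: "a = r + 1" "1 \<le> r" using Suc by (cases a) auto
    have "(ind (v @ [Rho (r+1), Pi (r+1)] @ (Up a (Suc k) @ u)) - ind (v @ [Pi r, Rho r] @ (Up a (Suc k) @ u)) :: arrQ list \<Rightarrow> 'a) \<in> idealI m d e"
      using Suc.prems r U by (intro gen1) auto
    hence G: "(ind (v @ [Rho a, Pi a] @ (Up a (Suc k) @ u)) - ind (v @ [Pi (a - 1)] @ Up (a - 1) (Suc (Suc k)) @ u) :: arrQ list \<Rightarrow> 'a) \<in> idealI m d e"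
      using r by simp
    show ?thesis using I_trans[OF IH[unfolded eq1 eq2] G] False by simp
  qed
qed

lemma NP_Rho: "l \<le> w \<Longrightarrow> NP d l w @ [Rho w] = NP d l (w + 1)"
proof -
  assume "l \<le> w"
  hence "Up l (w - l) @ [Rho (l + (w - l))] = Up l (w + 1 - l)" using Up_snoc[of l "w - l"] by (simp add: Suc_diff_le)
  thus ?thesis using \<open>l \<le> w\<close> by (simp add: NP_def)
qed

lemma NP_Pi_top: "1 \<le> t \<Longrightarrow> t + 1 \<le> d \<Longrightarrow> NP d (t+1) (t+1) @ [Pi t] = NP d t t"
proof -
  assume a: "1 \<le> t" "t + 1 \<le> d"
  have "Dn d (d - (t+1)) @ [Pi (d - Suc (d - (t+1)))] = Dn d (Suc (d - (t+1)))" by (rule Dn_snoc)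
  have e: "d - Suc (d - (t+1)) = t" "Suc (d - (t+1)) = d - t" using a by auto
  have "Dn d (d - (t+1)) @ [Pi t] = Dn d (d - t)" using Dn_snoc[of d "d - (t+1)", unfolded e(1), unfolded e(2)] .
  thus ?thesis by (simp add: NP_def del: Dn.simps)
qed

lemma normal:
  "is_path m d t p \<Longrightarrow> is_path m t e u \<Longrightarrow>
   (ind (p @ u) :: arrQ list \<Rightarrow> 'a::field) \<in> idealI m d e \<or>
   (\<exists>l. 1 \<le> l \<and> l \<le> d \<and> l \<le> t \<and> (ind (p @ u) - ind (NP d l t @ u) :: arrQ list \<Rightarrow> 'a) \<in> idealI m d e)"
proof (induction p arbitrary: t u rule: rev_induct)
  case Nil
  hence "t = d" "1 \<le> d" by auto
  moreover have "NP d d d = []" by (simp add: NP_def)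
  ultimately have "(ind ([] @ u) - ind (NP d d t @ u) :: arrQ list \<Rightarrow> 'a) \<in> idealI m d e"
    using I_refl[of u m d e] by simp
  thus ?case using \<open>t = d\<close> \<open>1 \<le> d\<close> by blast
next
  case (snoc \<gamma> q)
  from snoc.prems(1) obtain w where q: "is_path m d w q" and g: "is_path m w t [\<gamma>]"
    unfolding is_path_append by blast
  have gu: "is_path m w e ([\<gamma>] @ u)" using g snoc.prems(2) is_path_append by blast
  have eqp: "(q @ [\<gamma>]) @ u = q @ [\<gamma>] @ u" by simp
  from snoc.IH[OF q gu] show ?case
  proof (elim disjE exE conjE)
    assume "(ind (q @ [\<gamma>] @ u) :: arrQ list \<Rightarrow> 'a) \<in> idealI m d e"
    thus ?thesis by simp
  next
    fix l assume l: "1 \<le> l" "l \<le> d" "l \<le> w"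
      and H: "(ind (q @ [\<gamma>] @ u) - ind (NP d l w @ [\<gamma>] @ u) :: arrQ list \<Rightarrow> 'a) \<in> idealI m d e"
    have ga: "\<gamma> \<in> arrowsQ m" "srcQ \<gamma> = w" "tgtQ \<gamma> = t" using g by auto
    show ?thesis
    proof (cases \<gamma>)
      case (Rho r)
      hence "r = w" "t = w + 1" using ga by auto
      hence E: "NP d l w @ [\<gamma>] @ u = NP d l t @ u" using NP_Rho[OF l(3)] Rho by simp
      have "(ind ((q @ [\<gamma>]) @ u) - ind (NP d l t @ u) :: arrQ list \<Rightarrow> 'a) \<in> idealI m d e"
        using H unfolding E by simp
      moreover have "l \<le> t" using l \<open>t = w + 1\<close> by simp
      ultimately show ?thesis using l by blast
    next
      case (Pi r)
      hence rt: "r = t" "w = t + 1" "1 \<le> t" using ga by (auto simp: arrowsQ_def)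
      show ?thesis
      proof (cases "l = w")
        case True
        hence E: "NP d l w @ [\<gamma>] @ u = NP d t t @ u" using NP_Pi_top[of t d] rt l Pi by simp
        have "(ind ((q @ [\<gamma>]) @ u) - ind (NP d t t @ u) :: arrQ list \<Rightarrow> 'a) \<in> idealI m d e"
          using H unfolding E by simp
        moreover have "1 \<le> t" "t \<le> d" using l rt True by auto
        ultimately show ?thesis by blast
      next
        case False
        hence lw: "l < w" using l by simp
        define k where "k = w - l - 1"
        have wk: "w = l + Suc k" using lw k_def by simp
        have v: "is_path m d l (Dn d (d - l))" using is_path_Dn[of "d - l" d m] l is_path_range[OF q] by auto
        have u: "is_path m (l + k) e u" using snoc.prems(2) rt wk by simp
        have B: "(if l = 1 then (ind (Dn d (d - l) @ Up l (Suc k) @ [Pi (l + k)] @ u) :: arrQ list \<Rightarrow> 'a::field) \<in> idealI m d e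
           else (ind (Dn d (d - l) @ Up l (Suc k) @ [Pi (l + k)] @ u) - ind (Dn d (d - l) @ [Pi (l - 1)] @ Up (l - 1) (Suc k) @ u) :: arrQ list \<Rightarrow> 'a) \<in> idealI m d e)"
          using bubble[OF l(1) _ v u] wk is_path_range[OF q] rt by simp
        have eqN: "NP d l w @ [\<gamma>] @ u = Dn d (d - l) @ Up l (Suc k) @ [Pi (l + k)] @ u"
          using wk Pi rt by (simp add: NP_def)
        show ?thesis
        proof (cases "l = 1")
          case True
          thus ?thesis using I_trans0[OF H] B eqN by simp
        next
          case False
          obtain l' where l': "l = Suc l'" using l by (cases l) auto
          have e: "d - Suc (d - l) = l'" "Suc (d - l) = d - l'" using l l' by auto
          have D: "Dn d (d - l) @ [Pi l'] = Dn d (d - l')"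
            using Dn_snoc[of d "d - l", unfolded e(1), unfolded e(2)] .
          have tl: "t - l' = Suc k" using rt wk l' by simp
          have "Dn d (d - l) @ [Pi (l - 1)] @ Up (l - 1) (Suc k) @ u = (Dn d (d - l) @ [Pi l']) @ Up l' (Suc k) @ u"
            using l' by simp
          also have "\<dots> = NP d (l - 1) t @ u" unfolding D NP_def using l' tl by simp
          finally have NPE: "Dn d (d - l) @ [Pi (l - 1)] @ Up (l - 1) (Suc k) @ u = NP d (l - 1) t @ u" .
          have H': "(ind (q @ [\<gamma>] @ u) - ind (Dn d (d - l) @ Up l (Suc k) @ [Pi (l + k)] @ u) :: arrQ list \<Rightarrow> 'a) \<in> idealI m d e"
            using H unfolding eqN .
          have B2: "(ind (Dn d (d - l) @ Up l (Suc k) @ [Pi (l + k)] @ u) - ind (Dn d (d - l) @ [Pi (l - 1)] @ Up (l - 1) (Suc k) @ u) :: arrQ list \<Rightarrow> 'a) \<in> idealI m d e"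
            using B False by (simp split: if_split_asm)
          have "(ind ((q @ [\<gamma>]) @ u) - ind (NP d (l - 1) t @ u) :: arrQ list \<Rightarrow> 'a) \<in> idealI m d e"
            using I_trans[OF H' B2] unfolding NPE append_assoc .
          moreover have "1 \<le> l - 1" "l - 1 \<le> d" "l - 1 \<le> t" using l False rt wk by auto
          ultimately show ?thesis by blast
        qed
      qed
    qed
  qed
qed

lemma comm_lamJ:
  assumes M: "(M :: 'a::comm_ring_1 mat) \<in> carrier_mat e d"
  shows "(M * (lam \<cdot>\<^sub>m 1\<^sub>m d + Jmat d) = (lam \<cdot>\<^sub>m 1\<^sub>m e + Jmat e) * M) \<longleftrightarrow> M * Jmat d = Jmat e * M"
proof -
  have J: "(Jmat k :: 'a mat) \<in> carrier_mat k k" for k by (simp add: Jmat_def)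
  have L: "M * (lam \<cdot>\<^sub>m 1\<^sub>m d + Jmat d) = lam \<cdot>\<^sub>m M + M * Jmat d"
  proof -
    have "M * (lam \<cdot>\<^sub>m 1\<^sub>m d + Jmat d) = M * (lam \<cdot>\<^sub>m 1\<^sub>m d) + M * Jmat d"
      by (rule mult_add_distrib_mat[OF M]) (auto simp: Jmat_def)
    also have "M * (lam \<cdot>\<^sub>m 1\<^sub>m d) = lam \<cdot>\<^sub>m (M * 1\<^sub>m d)" by (rule mult_smult_distrib[OF M]) auto
    also have "M * 1\<^sub>m d = M" using M by simp
    finally show ?thesis .
  qed
  have R: "(lam \<cdot>\<^sub>m 1\<^sub>m e + Jmat e) * M = lam \<cdot>\<^sub>m M + Jmat e * M"
  proof -
    have "(lam \<cdot>\<^sub>m 1\<^sub>m e + Jmat e) * M = (lam \<cdot>\<^sub>m 1\<^sub>m e) * M + Jmat e * M"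
      by (rule add_mult_distrib_mat[OF _ _ M]) (auto simp: Jmat_def)
    also have "(lam \<cdot>\<^sub>m 1\<^sub>m e) * M = lam \<cdot>\<^sub>m (1\<^sub>m e * M)" by (rule mult_smult_assoc_mat[OF _ M]) auto
    also have "1\<^sub>m e * M = M" using M by simp
    finally show ?thesis .
  qed
  have c: "M * Jmat d \<in> carrier_mat e d" "Jmat e * M \<in> carrier_mat e d" using M J[of e] J[of d] by (auto intro: mult_carrier_mat)
  show ?thesis unfolding L R
  proof
    assume H: "lam \<cdot>\<^sub>m M + M * Jmat d = lam \<cdot>\<^sub>m M + Jmat e * M"
    show "M * Jmat d = Jmat e * M"
    proof (rule eq_matI)
      fix i j assume "i < dim_row (Jmat e * M)" "j < dim_col (Jmat e * M)"
      hence ij: "i < e" "j < d" using c by auto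
      have "(lam \<cdot>\<^sub>m M + M * Jmat d) $$ (i,j) = (lam \<cdot>\<^sub>m M + Jmat e * M) $$ (i,j)" using H by simp
      thus "(M * Jmat d) $$ (i,j) = (Jmat e * M) $$ (i,j)" using ij carrier_matD[OF c(1)] carrier_matD[OF c(2)] carrier_matD[OF M] by simp
    qed (use c M in \<open>auto simp: Jmat_def\<close>)
  qed simp
qed

lemma mod_le_n: "(x::nat) mod (n + 1) \<le> n"
  using mod_less_divisor[of "n+1" x] by simp

lemma Fhom_eq: "Fhom n d e c = (\<lambda>x. if x \<le> n then mat e d (\<lambda>(i,j). EvS d {p. c p \<noteq> 0} c i j) else 0\<^sub>m 0 0)"
  unfolding Fhom_def EvS_def by simp

lemma part1:
  fixes lam :: "'a::field" and c :: "arrQ list \<Rightarrow> 'a"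
  assumes g: "1 \<le> g" "g \<le> n" and c: "c \<in> kQ m d e"
  shows "Fhom n d e c \<in> homK n g (Vrep n g lam d) (Vrep n g lam e)"
proof -
  let ?P = "{p. c p \<noteq> 0}"
  have fin: "finite ?P" and paths: "\<And>p. p \<in> ?P \<Longrightarrow> is_path m d e p" using c unfolding kQ_def by auto
  define M where "M = mat e d (\<lambda>(i,j). EvS d ?P c i j)"
  have F: "Fhom n d e c = (\<lambda>x. if x \<le> n then M else 0\<^sub>m 0 0)" unfolding Fhom_eq M_def ..
  have Mc: "M \<in> carrier_mat e d" unfolding M_def by simp
  have JCM: "JC e d M" unfolding JC_def
  proof (intro allI impI)
    fix i j assume ij: "i < e" "j < d"
    have each: "(if j + 1 < d then Mpath d p $$ (i, j+1) else 0) = (if 0 < i then Mpath d p $$ (i - 1, j) else (0::'a))"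
      if "p \<in> ?P" for p using Mpath_JC[OF paths[OF that]] ij unfolding JC_def by blast
    have "(if j + 1 < d then M $$ (i, j+1) else 0) = (\<Sum>p\<in>?P. c p * (if j + 1 < d then Mpath d p $$ (i, j+1) else 0))"
      using ij by (cases "j + 1 < d") (simp_all add: M_def EvS_def)
    also have "\<dots> = (\<Sum>p\<in>?P. c p * (if 0 < i then Mpath d p $$ (i - 1, j) else 0))"
      by (rule sum.cong) (use each in auto)
    also have "\<dots> = (if 0 < i then M $$ (i - 1, j) else 0)"
      using ij by (cases "0 < i") (simp_all add: M_def EvS_def)
    finally show "(if j + 1 < d then M $$ (i, j+1) else 0) = (if 0 < i then M $$ (i - 1, j) else 0)" .
  qed
  have MJ: "M * Jmat d = Jmat e * M" using JC_iff[OF Mc] JCM by simp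
  have lamM: "M * (lam \<cdot>\<^sub>m 1\<^sub>m d + Jmat d) = (lam \<cdot>\<^sub>m 1\<^sub>m e + Jmat e) * M" using comm_lamJ[OF Mc] MJ by simp
  have one: "M * 1\<^sub>m d = 1\<^sub>m e * M" using Mc by simp
  show ?thesis unfolding homK_def
  proof (intro CollectI conjI allI impI ballI)
    fix x assume "x \<le> n" thus "Fhom n d e c x \<in> carrier_mat (fst (Vrep n g lam e) x) (fst (Vrep n g lam d) x)"
      using Mc by (simp add: F Vrep_def)
  next
    fix x assume "n < x" thus "Fhom n d e c x = 0\<^sub>m 0 0" by (simp add: F)
  next
    fix \<gamma> assume "\<gamma> \<in> arrowsK n g"
    have le: "tgtK n \<gamma> \<le> n" "srcK n \<gamma> \<le> n" by (cases \<gamma>; simp add: mod_le_n)+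
    show "Fhom n d e c (tgtK n \<gamma>) * snd (Vrep n g lam d) \<gamma> = snd (Vrep n g lam e) \<gamma> * Fhom n d e c (srcK n \<gamma>)"
      using le lamM one by (simp add: F Vrep_def)
  qed
qed

lemma toeplitz:
  assumes J: "JC e d (M :: 'a::comm_ring_1 mat)"
  shows "j < d \<Longrightarrow> i < e \<Longrightarrow> M $$ (i,j) = (if j \<le> i then M $$ (i - j, 0) else 0)"
proof (induction j arbitrary: i)
  case 0 thus ?case by simp
next
  case (Suc j)
  have "M $$ (i, Suc j) = (if 0 < i then M $$ (i - 1, j) else 0)"
    using J Suc.prems unfolding JC_def by (metis Suc_eq_plus1 Suc_lessD)
  thus ?case using Suc.IH[of "i - 1"] Suc.prems by (cases i) auto
qed

lemma toeplitz_zero: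
  assumes J: "JC e d (M :: 'a::comm_ring_1 mat)" and d: "1 \<le> d" and k: "k + d < e"
  shows "M $$ (k, 0) = 0"
proof -
  have kd: "k + d < e" "d - 1 < d" using k d by auto
  have "(if d - 1 + 1 < d then M $$ (k + d, d - 1 + 1) else 0) = (if 0 < k + d then M $$ (k + d - 1, d - 1) else 0)"
    using J kd unfolding JC_def by blast
  hence "M $$ (k + d - 1, d - 1) = 0" using d by simp
  moreover have "M $$ (k + d - 1, d - 1) = M $$ (k, 0)" using toeplitz[OF J, of "d - 1" "k + d - 1"] d k by simp
  ultimately show ?thesis by simp
qed

lemma hom_const:
  fixes f :: "nat \<Rightarrow> 'a::comm_ring_1 mat"
  assumes g: "1 \<le> g" "g \<le> n" and f: "f \<in> homK n g (Vrep n g lam d) (Vrep n g lam e)"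
  shows "x \<le> n \<Longrightarrow> f x = f 0"
proof -
  have car: "\<And>x. x \<le> n \<Longrightarrow> f x \<in> carrier_mat e d" using f unfolding homK_def Vrep_def by auto
  have arr: "\<And>\<gamma>. \<gamma> \<in> arrowsK n g \<Longrightarrow> f (tgtK n \<gamma>) * snd (Vrep n g lam d) \<gamma> = snd (Vrep n g lam e) \<gamma> * f (srcK n \<gamma>)"
    using f unfolding homK_def by auto
  have step1: "f (x + 1) = f x" if "x + 1 < g" for x
  proof -
    have "Beta x \<in> arrowsK n g" using that unfolding arrowsK_def by auto
    from arr[OF this] have "f ((x + 1) mod (n + 1)) * 1\<^sub>m d = 1\<^sub>m e * f (x mod (n + 1))"
      using that by (simp add: Vrep_def split: if_split_asm)
    moreover have "(x + 1) mod (n + 1) = x + 1" "x mod (n + 1) = x" using that g by auto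
    ultimately show ?thesis using car[of x] car[of "x+1"] that g by simp
  qed
  have step2: "f x = f ((x + 1) mod (n + 1))" if "g \<le> x" "x \<le> n" for x
  proof -
    have "Alpha x \<in> arrowsK n g" using that unfolding arrowsK_def by auto
    from arr[OF this] have "f (x mod (n + 1)) * 1\<^sub>m d = 1\<^sub>m e * f ((x + 1) mod (n + 1))"
      using g by (simp add: Vrep_def)
    moreover have "x mod (n + 1) = x" using that by auto
    ultimately show ?thesis using car[of x] car[of "(x + 1) mod (n + 1)"] that mod_le_n[of "x+1" n] by simp
  qed
  have low: "x < g \<Longrightarrow> f x = f 0" for x
    by (induction x) (use step1 in auto)
  have high: "j \<le> n - g \<Longrightarrow> f (n - j) = f 0" for j
  proof (induction j)
    case 0
    have "f n = f ((n + 1) mod (n + 1))" using step2[of n] g by simp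
    thus ?case by simp
  next
    case (Suc j)
    have "f (n - Suc j) = f ((n - Suc j + 1) mod (n + 1))" using step2[of "n - Suc j"] Suc.prems g by simp
    also have "(n - Suc j + 1) mod (n + 1) = n - j" using Suc.prems g by simp
    finally show ?case using Suc by simp
  qed
  assume x: "x \<le> n"
  show "f x = f 0"
  proof (cases "x < g")
    case True thus ?thesis by (rule low)
  next
    case False thus ?thesis using high[of "n - x"] x by simp
  qed
qed

lemma sum_NP:
  assumes d: "1 \<le> d" "d \<le> m + 2" and e: "1 \<le> e" "e \<le> m + 2" and ij: "i < e" "j < d"
  shows "(\<Sum>l\<in>{1..min d e}. b l * ((Mpath d (NP d l e) :: 'a::comm_ring_1 mat) $$ (i,j)))
       = (if j \<le> i \<and> e + j - i \<le> d then b (e + j - i) else 0)"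
proof -
  have "(\<Sum>l\<in>{1..min d e}. b l * ((Mpath d (NP d l e) :: 'a mat) $$ (i,j)))
      = (\<Sum>l\<in>{1..min d e}. if l = e + j - i \<and> j \<le> i then b l else 0)"
  proof (rule sum.cong)
    fix l assume l: "l \<in> {1..min d e}"
    have "(Mpath d (NP d l e) :: 'a mat) $$ (i,j) = (if j < l \<and> i = j + (e - l) then 1 else 0)"
      using Mpath_NP[of l d e m, where 'a='a] l d e ij by simp
    moreover have "(j < l \<and> i = j + (e - l)) \<longleftrightarrow> (l = e + j - i \<and> j \<le> i)" using l ij by auto
    ultimately show "b l * ((Mpath d (NP d l e) :: 'a mat) $$ (i,j)) = (if l = e + j - i \<and> j \<le> i then b l else 0)"
      by simp
  qed simp
  also have "\<dots> = (if j \<le> i \<and> e + j - i \<le> d then b (e + j - i) else 0)"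
    using ij by (cases "j \<le> i") (auto simp: sum.delta)
  finally show ?thesis .
qed

lemma part2:
  fixes lam :: "'a::field" and f :: "nat \<Rightarrow> 'a mat"
  assumes g: "1 \<le> g" "g \<le> n" and d: "1 \<le> d" "d \<le> m + 2" and e: "1 \<le> e" "e \<le> m + 2"
    and f: "f \<in> homK n g (Vrep n g lam d) (Vrep n g lam e)"
  shows "\<exists>c\<in>kQ m d e. Fhom n d e c = f"
proof -
  have car: "\<And>x. x \<le> n \<Longrightarrow> f x \<in> carrier_mat e d" and zero: "\<And>x. n < x \<Longrightarrow> f x = 0\<^sub>m 0 0"
    using f unfolding homK_def Vrep_def by auto
  have const: "\<And>x. x \<le> n \<Longrightarrow> f x = f 0" using hom_const[OF g f] by blast
  define M where "M = f 0"
  have Mc: "M \<in> carrier_mat e d" using car[of 0] M_def by simp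
  have "Beta (g - 1) \<in> arrowsK n g" using g unfolding arrowsK_def by auto
  hence "f (tgtK n (Beta (g - 1))) * snd (Vrep n g lam d) (Beta (g - 1)) = snd (Vrep n g lam e) (Beta (g - 1)) * f (srcK n (Beta (g - 1)))"
    using f unfolding homK_def by auto
  moreover have "tgtK n (Beta (g - 1)) \<le> n" "srcK n (Beta (g - 1)) \<le> n" by (simp_all only: tgtK.simps srcK.simps mod_le_n)
  hence "f (tgtK n (Beta (g - 1))) = M" "f (srcK n (Beta (g - 1))) = M"
    using const M_def by blast+
  ultimately have "M * (lam \<cdot>\<^sub>m 1\<^sub>m d + Jmat d) = (lam \<cdot>\<^sub>m 1\<^sub>m e + Jmat e) * M" by (simp add: Vrep_def)
  hence "M * Jmat d = Jmat e * M" using comm_lamJ[OF Mc] by simp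
  hence J: "JC e d M" using JC_iff[OF Mc] by simp
  define L where "L = {1..min d e}"
  define a where "a l = M $$ (e - l, 0)" for l
  define c :: "arrQ list \<Rightarrow> 'a" where "c p = (\<Sum>l\<in>L. a l * ind (NP d l e) p)" for p
  have finL: "finite L" unfolding L_def by simp
  have injL: "inj_on (\<lambda>l. NP d l e) L" unfolding inj_on_def L_def using NP_inj by auto
  have supp: "{p. c p \<noteq> 0} \<subseteq> (\<lambda>l. NP d l e) ` L"
  proof
    fix p assume "p \<in> {p. c p \<noteq> 0}"
    hence nz: "(\<Sum>l\<in>L. a l * ind (NP d l e) p) \<noteq> (0::'a)" unfolding c_def by simp
    have "\<exists>l\<in>L. a l * ind (NP d l e) p \<noteq> (0::'a)"
    proof (rule ccontr)
      assume "\<not> (\<exists>l\<in>L. a l * ind (NP d l e) p \<noteq> (0::'a))"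
      hence "\<forall>l\<in>L. a l * ind (NP d l e) p = (0::'a)" by blast
      hence "(\<Sum>l\<in>L. a l * ind (NP d l e) p) = (0::'a)" by (rule sum.neutral)
      thus False using nz by contradiction
    qed
    then obtain l where "l \<in> L" "ind (NP d l e) p \<noteq> (0::'a)" by auto
    thus "p \<in> (\<lambda>l. NP d l e) ` L" unfolding ind_def by (auto split: if_splits)
  qed
  have cNP: "c (NP d l e) = a l" if l: "l \<in> L" for l
  proof -
    have "c (NP d l e) = (\<Sum>l'\<in>L. if l' = l then a l' else 0)"
      unfolding c_def
    proof (rule sum.cong)
      fix l' assume "l' \<in> L"
      thus "a l' * ind (NP d l' e) (NP d l e) = (if l' = l then a l' else 0)"
        using injL l unfolding ind_def inj_on_def by auto
    qed simp
    thus ?thesis using finL l by simp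
  qed
  have cQ: "c \<in> kQ m d e"
    unfolding kQ_def
  proof (intro CollectI conjI allI impI)
    show "finite {p. c p \<noteq> 0}" using supp finL finite_subset by blast
    fix p assume "c p \<noteq> 0"
    then obtain l where "l \<in> L" "p = NP d l e" using supp by auto
    thus "is_path m d e p" using is_path_NP[of l d e m] d e unfolding L_def by auto
  qed
  have Ev: "EvS d {p. c p \<noteq> 0} c i j = M $$ (i,j)" if ij: "i < e" "j < d" for i j
  proof -
    have "EvS d {p. c p \<noteq> 0} c i j = EvS d ((\<lambda>l. NP d l e) ` L) c i j"
      using supp finL by (intro EvS_mono) auto
    also have "\<dots> = (\<Sum>l\<in>L. c (NP d l e) * (Mpath d (NP d l e) $$ (i,j)))"
      unfolding EvS_def by (rule sum.reindex[OF injL, unfolded comp_def])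
    also have "\<dots> = (\<Sum>l\<in>L. a l * (Mpath d (NP d l e) $$ (i,j)))"
      by (rule sum.cong) (simp_all add: cNP)
    also have "\<dots> = (if j \<le> i \<and> e + j - i \<le> d then a (e + j - i) else 0)"
      unfolding L_def by (rule sum_NP[OF d e ij])
    also have "\<dots> = M $$ (i,j)"
    proof -
      have T: "M $$ (i,j) = (if j \<le> i then M $$ (i - j, 0) else 0)" by (rule toeplitz[OF J ij(2) ij(1)])
      show ?thesis
      proof (cases "j \<le> i")
        case True
        show ?thesis
        proof (cases "e + j - i \<le> d")
          case True
          thus ?thesis using T \<open>j \<le> i\<close> ij unfolding a_def by simp
        next
          case False
          hence "M $$ (i - j, 0) = 0" using toeplitz_zero[OF J d(1), of "i - j"] \<open>j \<le> i\<close> ij by simp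
          thus ?thesis using T False by simp
        qed
      next
        case False thus ?thesis using T by simp
      qed
    qed
    finally show ?thesis .
  qed
  have "Fhom n d e c = f"
  proof
    fix x
    show "Fhom n d e c x = f x"
    proof (cases "x \<le> n")
      case True
      have "mat e d (\<lambda>(i,j). EvS d {p. c p \<noteq> 0} c i j) = M"
        using Mc Ev by (intro eq_matI) auto
      moreover have fx: "f x = M" using const[OF True] unfolding M_def .
      ultimately show ?thesis using True by (simp add: Fhom_eq)
    next
      case False thus ?thesis using zero by (simp add: Fhom_eq)
    qed
  qed
  thus ?thesis using cQ by blast
qed

lemma w_props:
  fixes w :: "arrQ list \<Rightarrow> 'a::field"
  assumes d: "1 \<le> d" "d \<le> m + 2" and e: "1 \<le> e" "e \<le> m + 2"
    and w_def: "w = (\<lambda>q. \<Sum>l\<in>{1..min d e}. b l * ind (NP d l e) q)"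
  shows "{q. w q \<noteq> 0} \<subseteq> (\<lambda>l. NP d l e) ` {1..min d e}"
    and "i < e \<Longrightarrow> j < d \<Longrightarrow> EvS d ((\<lambda>l. NP d l e) ` {1..min d e}) w i j = (if j \<le> i \<and> e + j - i \<le> d then b (e + j - i) else 0)"
proof -
  let ?L = "{1..min d e}"
  have finL: "finite ?L" by simp
  have injL: "inj_on (\<lambda>l. NP d l e) ?L" unfolding inj_on_def using NP_inj by auto
  show supp: "{q. w q \<noteq> 0} \<subseteq> (\<lambda>l. NP d l e) ` ?L"
  proof
    fix p assume "p \<in> {p. w p \<noteq> 0}"
    hence nz: "(\<Sum>l\<in>?L. b l * ind (NP d l e) p) \<noteq> (0::'a)" unfolding w_def by simp
    have "\<exists>l\<in>?L. b l * ind (NP d l e) p \<noteq> (0::'a)"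
    proof (rule ccontr)
      assume "\<not> (\<exists>l\<in>?L. b l * ind (NP d l e) p \<noteq> (0::'a))"
      hence "\<forall>l\<in>?L. b l * ind (NP d l e) p = (0::'a)" by blast
      hence "(\<Sum>l\<in>?L. b l * ind (NP d l e) p) = (0::'a)" by (rule sum.neutral)
      thus False using nz by contradiction
    qed
    then obtain l where "l \<in> ?L" "ind (NP d l e) p \<noteq> (0::'a)" by auto
    thus "p \<in> (\<lambda>l. NP d l e) ` ?L" unfolding ind_def by (auto split: if_splits)
  qed
  have wNP: "w (NP d l e) = b l" if l: "l \<in> ?L" for l
  proof -
    have "w (NP d l e) = (\<Sum>l'\<in>?L. if l' = l then b l' else 0)"
      unfolding w_def
    proof (rule sum.cong)
      fix l' assume l': "l' \<in> ?L"
      have "(NP d l e = NP d l' e) = (l = l')" by (rule inj_on_eq_iff[OF injL l l'])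
      thus "b l' * ind (NP d l' e) (NP d l e) = (if l' = l then b l' else 0)"
        unfolding ind_def by auto
    qed simp
    thus ?thesis using finL l by simp
  qed
  assume ij: "i < e" "j < d"
  have "EvS d ((\<lambda>l. NP d l e) ` ?L) w i j = (\<Sum>l\<in>?L. w (NP d l e) * (Mpath d (NP d l e) $$ (i,j)))"
    unfolding EvS_def by (rule sum.reindex[OF injL, unfolded comp_def])
  also have "\<dots> = (\<Sum>l\<in>?L. b l * (Mpath d (NP d l e) $$ (i,j)))"
    by (rule sum.cong) (simp_all add: wNP)
  also have "\<dots> = (if j \<le> i \<and> e + j - i \<le> d then b (e + j - i) else 0)"
    by (rule sum_NP[OF d e ij])
  finally show "EvS d ((\<lambda>l. NP d l e) ` ?L) w i j = (if j \<le> i \<and> e + j - i \<le> d then b (e + j - i) else 0)" .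
qed

lemma part3_ker:
  fixes c :: "arrQ list \<Rightarrow> 'a::field"
  assumes d: "1 \<le> d" "d \<le> m + 2" and e: "1 \<le> e" "e \<le> m + 2" and c: "c \<in> kQ m d e"
    and Z: "\<And>i j. i < e \<Longrightarrow> j < d \<Longrightarrow> EvS d {p. c p \<noteq> 0} c i j = 0"
  shows "c \<in> idealI m d e"
proof -
  let ?P = "{p. c p \<noteq> 0}" and ?L = "{1..min d e}" and ?I = "idealI m d e"
  have finP: "finite ?P" and paths: "\<And>p. p \<in> ?P \<Longrightarrow> is_path m d e p" using c unfolding kQ_def by auto
  have nf_ex: "(ind p :: arrQ list \<Rightarrow> 'a) \<in> ?I \<or> (\<exists>l. 1 \<le> l \<and> l \<le> d \<and> l \<le> e \<and> (ind p - ind (NP d l e) :: arrQ list \<Rightarrow> 'a) \<in> ?I)"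
    if "p \<in> ?P" for p
    using normal[OF paths[OF that], where u="[]"] e by simp
  define nf where "nf p = (if (ind p :: arrQ list \<Rightarrow> 'a) \<in> ?I then 0 else
      (SOME l. 1 \<le> l \<and> l \<le> d \<and> l \<le> e \<and> (ind p - ind (NP d l e) :: arrQ list \<Rightarrow> 'a) \<in> ?I))" for p
  define r where "r p = (\<lambda>q. ind p q - (if nf p = 0 then 0 else ind (NP d (nf p) e) q) :: 'a)" for p
  have nfL: "nf p = 0 \<or> nf p \<in> ?L" and rI: "r p \<in> ?I" if "p \<in> ?P" for p
  proof -
    have "(nf p = 0 \<and> (ind p :: arrQ list \<Rightarrow> 'a) \<in> ?I) \<or> (nf p \<in> ?L \<and> (ind p - ind (NP d (nf p) e) :: arrQ list \<Rightarrow> 'a) \<in> ?I)"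
    proof (cases "(ind p :: arrQ list \<Rightarrow> 'a) \<in> ?I")
      case True thus ?thesis unfolding nf_def by simp
    next
      case False
      hence ex: "\<exists>l. 1 \<le> l \<and> l \<le> d \<and> l \<le> e \<and> (ind p - ind (NP d l e) :: arrQ list \<Rightarrow> 'a) \<in> ?I"
        using nf_ex[OF that] by blast
      have "1 \<le> nf p \<and> nf p \<le> d \<and> nf p \<le> e \<and> (ind p - ind (NP d (nf p) e) :: arrQ list \<Rightarrow> 'a) \<in> ?I"
        unfolding nf_def using False someI_ex[OF ex] by simp
      thus ?thesis by auto
    qed
    thus "nf p = 0 \<or> nf p \<in> ?L" by blast
    show "r p \<in> ?I"
    proof (cases "nf p = 0")
      case True
      hence "r p = ind p" unfolding r_def by auto
      thus ?thesis using \<open>(nf p = 0 \<and> _) \<or> _\<close> True by auto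
    next
      case False
      hence "r p = ind p - ind (NP d (nf p) e)" unfolding r_def by auto
      thus ?thesis using \<open>(nf p = 0 \<and> _) \<or> _\<close> False by auto
    qed
  qed
  define b where "b l = (\<Sum>p\<in>?P. if nf p = l then c p else 0)" for l
  define w :: "arrQ list \<Rightarrow> 'a" where "w = (\<lambda>q. \<Sum>l\<in>?L. b l * ind (NP d l e) q)"
  have cw: "(\<lambda>q. c q - w q) = (\<lambda>q. \<Sum>p\<in>?P. c p * r p q)"
  proof
    fix q
    have c1: "c q = (\<Sum>p\<in>?P. c p * ind p q)"
    proof -
      have "(\<Sum>p\<in>?P. c p * ind p q) = (\<Sum>p\<in>?P. if p = q then c q else 0)"
        by (rule sum.cong) (auto simp: ind_def)
      also have "\<dots> = c q" using finP by simp
      finally show ?thesis by simp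
    qed
    have w1: "w q = (\<Sum>p\<in>?P. c p * (if nf p = 0 then 0 else ind (NP d (nf p) e) q))"
    proof -
      have "w q = (\<Sum>l\<in>?L. \<Sum>p\<in>?P. (if nf p = l then c p else 0) * ind (NP d l e) q)"
        unfolding w_def b_def by (simp add: sum_distrib_right)
      also have "\<dots> = (\<Sum>l\<in>?L. \<Sum>p\<in>?P. if nf p = l then c p * ind (NP d l e) q else 0)"
        by (intro sum.cong refl) simp
      also have "\<dots> = (\<Sum>p\<in>?P. \<Sum>l\<in>?L. if nf p = l then c p * ind (NP d l e) q else 0)"
        by (rule sum.swap)
      also have "\<dots> = (\<Sum>p\<in>?P. c p * (if nf p = 0 then 0 else ind (NP d (nf p) e) q))"
      proof (rule sum.cong)
        fix p assume p: "p \<in> ?P"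
        have "(\<Sum>l\<in>?L. if nf p = l then c p * ind (NP d l e) q else 0) = (\<Sum>l\<in>?L. if l = nf p then c p * ind (NP d (nf p) e) q else 0)"
          by (rule sum.cong) auto
        also have "\<dots> = (if nf p \<in> ?L then c p * ind (NP d (nf p) e) q else 0)" by (simp only: sum.delta finite_atLeastAtMost)
        also have "\<dots> = c p * (if nf p = 0 then 0 else ind (NP d (nf p) e) q)"
          using nfL[OF p] by auto
        finally show "(\<Sum>l\<in>?L. if nf p = l then c p * ind (NP d l e) q else 0) = c p * (if nf p = 0 then 0 else ind (NP d (nf p) e) q)" .
      qed simp
      finally show ?thesis .
    qed
    show "c q - w q = (\<Sum>p\<in>?P. c p * r p q)"
      unfolding c1 w1 r_def sum_subtractf[symmetric] by (intro sum.cong refl) (simp add: right_diff_distrib)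
  qed
  have cwI: "(\<lambda>q. c q - w q) \<in> ?I" unfolding cw
    by (rule I_sum[OF finP]) (rule I_smult[OF rI])
  have b0: "b l = 0" if l: "l \<in> ?L" for l
  proof -
    let ?S = "?P \<union> (\<lambda>l. NP d l e) ` ?L"
    have finS: "finite ?S" using finP by simp
    have wsupp: "{q. w q \<noteq> 0} \<subseteq> (\<lambda>l. NP d l e) ` ?L" by (rule w_props(1)[OF d e w_def])
    have ij: "e - l < e" "0 < d" using l d by auto
    have ev: "EvS d ?S (\<lambda>q. c q - w q) (e - l) 0 = 0"
    proof -
      have sub: "{p. c p - w p \<noteq> 0} \<subseteq> ?S" using wsupp by auto
      show ?thesis using ideal_ev[OF cwI] finS sub ij by blast
    qed
    have "EvS d ?S (\<lambda>q. c q - w q) (e - l) 0 = (-1) * EvS d ?S w (e - l) 0 + EvS d ?S c (e - l) 0"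
      using EvS_lin[of d ?S "-1" w c "e - l" 0] by simp
    moreover have "EvS d ?S c (e - l) 0 = EvS d ?P c (e - l) 0" using finS by (intro EvS_mono[symmetric]) auto
    moreover have "EvS d ?P c (e - l) 0 = 0" using Z ij by simp
    moreover have "EvS d ?S w (e - l) 0 = EvS d ((\<lambda>l. NP d l e) ` ?L) w (e - l) 0"
      using finS wsupp by (intro EvS_mono[symmetric]) auto
    moreover have "EvS d ((\<lambda>l. NP d l e) ` ?L) w (e - l) 0 = b l"
      using w_props(2)[OF d e w_def, of "e - l" 0] ij l by auto
    ultimately show ?thesis using ev by simp
  qed
  have "w = (\<lambda>_. 0)" unfolding w_def using b0 by (intro ext sum.neutral) simp
  hence "(\<lambda>q. c q - w q) = c" by simp
  thus ?thesis using cwI by simp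
qed

lemma part3:
  fixes c :: "arrQ list \<Rightarrow> 'a::field"
  assumes d: "1 \<le> d" "d \<le> m + 2" and e: "1 \<le> e" "e \<le> m + 2" and c: "c \<in> kQ m d e"
  shows "Fhom n d e c = zero_hom n d e \<longleftrightarrow> c \<in> idealI m d e"
proof
  assume F: "Fhom n d e c = zero_hom n d e"
  have "Fhom n d e c 0 = zero_hom n d e 0" using F by simp
  hence M0: "mat e d (\<lambda>(i,j). EvS d {p. c p \<noteq> 0} c i j) = 0\<^sub>m e d" by (simp add: Fhom_eq zero_hom_def)
  have Z: "EvS d {p. c p \<noteq> 0} c i j = 0" if "i < e" "j < d" for i j
  proof -
    have "mat e d (\<lambda>(i,j). EvS d {p. c p \<noteq> 0} c i j) $$ (i,j) = (0\<^sub>m e d :: 'a mat) $$ (i,j)" using M0 by simp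
    thus ?thesis using that by simp
  qed
  show "c \<in> idealI m d e" by (rule part3_ker[OF d e c Z])
next
  assume I: "c \<in> idealI m d e"
  have Z: "EvS d {p. c p \<noteq> 0} c i j = 0" if "i < e" "j < d" for i j
    using ideal_ev[OF I] that by blast
  have M0: "mat e d (\<lambda>(i,j). EvS d {p. c p \<noteq> 0} c i j) = 0\<^sub>m e d"
    by (rule eq_matI) (auto simp: Z)
  show "Fhom n d e c = zero_hom n d e"
    by (rule ext) (simp add: Fhom_eq zero_hom_def M0)
qed

theorem mainTheorem4:
  fixes lam :: "'a::alg_closed_field" and n g m :: nat
  assumes "1 \<le> n" and "1 \<le> g" and "g \<le> n" and "lam \<noteq> 0"
  shows "\<forall>d\<in>{1..m+2}. \<forall>e\<in>{1..m+2}.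
     (\<forall>c\<in>kQ m d e. Fhom n d e c \<in> homK n g (Vrep n g lam d) (Vrep n g lam e))
   \<and> (\<forall>f\<in>homK n g (Vrep n g lam d) (Vrep n g lam e). \<exists>c\<in>kQ m d e. Fhom n d e c = f)
   \<and> (\<forall>c::arrQ list \<Rightarrow> 'a\<in>kQ m d e. Fhom n d e c = zero_hom n d e \<longleftrightarrow> c \<in> idealI m d e)"
proof -
  have "(\<forall>c\<in>kQ m d e. Fhom n d e c \<in> homK n g (Vrep n g lam d) (Vrep n g lam e))
   \<and> (\<forall>f\<in>homK n g (Vrep n g lam d) (Vrep n g lam e). \<exists>c\<in>kQ m d e. Fhom n d e c = f)
   \<and> (\<forall>c::arrQ list \<Rightarrow> 'a\<in>kQ m d e. Fhom n d e c = zero_hom n d e \<longleftrightarrow> c \<in> idealI m d e)"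
    if d: "d \<in> {1..m+2}" and e: "e \<in> {1..m+2}" for d e
  proof (intro conjI)
    show "\<forall>c\<in>kQ m d e. Fhom n d e c \<in> homK n g (Vrep n g lam d) (Vrep n g lam e)"
      using part1[of g n _ m d e lam] assms by blast
    show "\<forall>f\<in>homK n g (Vrep n g lam d) (Vrep n g lam e). \<exists>c\<in>kQ m d e. Fhom n d e c = f"
      using part2[of g n d m e _ lam] assms d e by auto
    show "\<forall>c::arrQ list \<Rightarrow> 'a\<in>kQ m d e. Fhom n d e c = zero_hom n d e \<longleftrightarrow> c \<in> idealI m d e"
      using part3[of d m e] d e by auto
  qed
  thus ?thesis by blast
qed

end
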